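(* Let $\{X_\gamma\}_{\gamma\in\Gamma}$ be a family of strictly convex real Banach spaces with $\dim(X_\gamma)\geq 2$ for every $\gamma\in\Gamma$, and let $Z_\infty=\bigoplus^{\ell_\infty}_{\gamma\in\Gamma}X_\gamma$. Then every convex body in $Z_\infty$ satisfies the strong Mankiewicz property.
   Context: All Banach spaces are real. $Z_\infty=\bigoplus^{\ell_\infty}_{\gamma\in\Gamma}X_\gamma$ is the space of families $z=(z(\gamma))_{\gamma\in\Gamma}$ with $z(\gamma)\in X_\gamma$ and $\|z\|=\sup_\gamma\|z(\gamma)\|<\infty$. A Banach space is strictly convex if every point of its unit sphere is an extreme point of its closed unit ball. A convex body of a normed space is a closed convex subset with non-empty interior. A convex subset $C$ of a normed space satisfies the strong Mankiewicz property if every surjective isometry from $C$ onto an arbitrary convex subset $L$ of an arbitrary normed space $Y$ is affine. *)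

theory Defs
  imports "HOL-Analysis.Analysis"
begin

text \<open>Each Banach space X_gamma is represented (up to linear isometry) as a closed
  linear subspace X gamma of one ambient real Banach space of type 'a, with the
  restricted norm.\<close>

definition strictly_convex_space :: "'a::real_normed_vector set \<Rightarrow> bool" where
  "strictly_convex_space X \<longleftrightarrow>
     (\<forall>x\<in>X. norm x = 1 \<longrightarrow> x extreme_point_of (X \<inter> cball 0 1))"

definition dim_ge_2 :: "'a::real_vector set \<Rightarrow> bool" where
  "dim_ge_2 X \<longleftrightarrow> (\<forall>v. \<not> X \<subseteq> span {v})"

definition linf_sum :: "('i \<Rightarrow> 'a::real_normed_vector set) \<Rightarrow> ('i \<Rightarrow> 'a) set" where
  "linf_sum X = {z. (\<forall>\<gamma>. z \<gamma> \<in> X \<gamma>) \<and> bdd_above (range (\<lambda>\<gamma>. norm (z \<gamma>)))}"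

definition linf_norm :: "('i \<Rightarrow> 'a::real_normed_vector) \<Rightarrow> real" where
  "linf_norm z = (SUP \<gamma>. norm (z \<gamma>))"

definition linf_dist :: "('i \<Rightarrow> 'a::real_normed_vector) \<Rightarrow> ('i \<Rightarrow> 'a) \<Rightarrow> real" where
  "linf_dist z w = linf_norm (\<lambda>\<gamma>. z \<gamma> - w \<gamma>)"

definition lcomb :: "real \<Rightarrow> ('i \<Rightarrow> 'a::real_vector) \<Rightarrow> ('i \<Rightarrow> 'a) \<Rightarrow> ('i \<Rightarrow> 'a)" where
  "lcomb t x y = (\<lambda>\<gamma>. (1 - t) *\<^sub>R x \<gamma> + t *\<^sub>R y \<gamma>)"

definition linf_convex :: "('i \<Rightarrow> 'a::real_vector) set \<Rightarrow> bool" where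
  "linf_convex C \<longleftrightarrow> (\<forall>x\<in>C. \<forall>y\<in>C. \<forall>t. 0 \<le> t \<and> t \<le> 1 \<longrightarrow> lcomb t x y \<in> C)"

definition linf_convex_body :: "('i \<Rightarrow> 'a::real_normed_vector set) \<Rightarrow> ('i \<Rightarrow> 'a) set \<Rightarrow> bool" where
  "linf_convex_body X C \<longleftrightarrow>
     C \<subseteq> linf_sum X \<and> linf_convex C \<and>
     (\<forall>z\<in>linf_sum X. (\<forall>e>0. \<exists>c\<in>C. linf_dist z c < e) \<longrightarrow> z \<in> C) \<and>
     (\<exists>z\<in>C. \<exists>r>0. {w\<in>linf_sum X. linf_dist w z < r} \<subseteq> C)"

definition strong_mankiewicz :: "('i \<Rightarrow> 'a::real_normed_vector) set \<Rightarrow> 'b::real_normed_vector itself \<Rightarrow> bool" where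
  "strong_mankiewicz C _ \<longleftrightarrow>
     (\<forall>(f :: ('i \<Rightarrow> 'a) \<Rightarrow> 'b) L.
        convex L \<and> f ` C = L \<and> (\<forall>x\<in>C. \<forall>y\<in>C. dist (f x) (f y) = linf_dist x y)
        \<longrightarrow> (\<forall>x\<in>C. \<forall>y\<in>C. \<forall>t. 0 \<le> t \<and> t \<le> 1 \<longrightarrow>
               f (lcomb t x y) = (1 - t) *\<^sub>R f x + t *\<^sub>R f y))"

end

theory Submission
  imports Defs
begin


lemma sc_eq:
  fixes S :: "'a::real_normed_vector set"
  assumes scs: "strictly_convex_space S" and sub: "subspace S" and uS: "u \<in> S"
    and nu: "norm u = r" and r: "r > 0" and aS: "a \<in> S"
    and na: "norm a \<le> t * r" and nua: "norm (u - a) \<le> (1 - t) * r"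
    and t0: "0 \<le> t" and t1: "t \<le> 1"
  shows "a = t *\<^sub>R u"
proof (cases "t = 0")
  case True then show ?thesis using na by simp
next
  case False
  show ?thesis
  proof (cases "t = 1")
    case True then show ?thesis using nua by simp
  next
    case False2: False
    have tt: "0 < t" "t < 1" using t0 t1 \<open>t \<noteq> 0\<close> False2 by auto
    define p where "p = (1 / (t*r)) *\<^sub>R a"
    define q where "q = (1 / ((1-t)*r)) *\<^sub>R (u - a)"
    define e where "e = (1/r) *\<^sub>R u"
    have pS: "p \<in> S \<inter> cball 0 1"
    proof
      show "p \<in> S" unfolding p_def using sub aS by (simp add: subspace_scale)
      have "norm p = norm a / (t*r)" unfolding p_def using tt r by simp
      also have "\<dots> \<le> 1" using na tt r by (simp add: divide_le_eq)
      finally show "p \<in> cball 0 1" by simp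
    qed
    have qS: "q \<in> S \<inter> cball 0 1"
    proof
      show "q \<in> S" unfolding q_def using sub aS uS by (simp add: subspace_scale subspace_diff)
      have "norm q = norm (u - a) / ((1-t)*r)" unfolding q_def using tt r by simp
      also have "\<dots> \<le> 1" using nua tt r by (simp add: divide_le_eq)
      finally show "q \<in> cball 0 1" by simp
    qed
    have eS: "e \<in> S" unfolding e_def using sub uS by (simp add: subspace_scale)
    have ne: "norm e = 1" unfolding e_def using nu r by simp
    have ext: "e extreme_point_of (S \<inter> cball 0 1)" using scs eS ne unfolding strictly_convex_space_def by blast
    have c1: "(1 - t) *\<^sub>R q = (1/r) *\<^sub>R (u - a)"
      unfolding q_def using tt r by simp
    have c2: "t *\<^sub>R p = (1/r) *\<^sub>R a"
      unfolding p_def using tt r by simp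
    have ecomb: "e = (1 - t) *\<^sub>R q + t *\<^sub>R p"
      unfolding c1 c2 e_def by (simp add: algebra_simps)
    have "p = q"
    proof (rule ccontr)
      assume "p \<noteq> q"
      then have "e \<in> open_segment q p" using ecomb tt unfolding in_segment by auto
      then show False using ext pS qS unfolding extreme_point_of_def by blast
    qed
    have a1: "a = (t*r) *\<^sub>R p" unfolding p_def using tt r by simp
    have a2: "u - a = ((1-t)*r) *\<^sub>R q" unfolding q_def using tt r by simp
    have "u = a + (u - a)" by simp
    also have "\<dots> = (t*r) *\<^sub>R p + ((1-t)*r) *\<^sub>R q" by (rule arg_cong2[where f="(+)"]) (rule a1, rule a2)
    also have "\<dots> = ((t*r) + ((1-t)*r)) *\<^sub>R p" unfolding \<open>p = q\<close> by (rule scaleR_left_distrib[symmetric])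
    also have "(t*r) + ((1-t)*r) = r" by (simp add: algebra_simps)
    finally have "u = r *\<^sub>R p" .
    then show ?thesis using a1 by simp
  qed
qed




lemma linf_norm_ge: "bdd_above (range (\<lambda>\<gamma>. norm (u \<gamma>))) \<Longrightarrow> norm (u \<gamma>) \<le> linf_norm u"
  unfolding linf_norm_def by (rule cSUP_upper) auto

lemma linf_norm_le: "(\<And>\<gamma>. norm (u \<gamma>) \<le> B) \<Longrightarrow> linf_norm u \<le> B"
  unfolding linf_norm_def by (rule cSUP_least) auto

lemma bddI: "(\<And>\<gamma>. norm (u \<gamma>) \<le> B) \<Longrightarrow> bdd_above (range (\<lambda>\<gamma>. norm (u \<gamma>)))"
  by (rule bdd_aboveI[where M=B]) auto

lemma linf_sum_bound: "z \<in> linf_sum X \<Longrightarrow> \<exists>M. \<forall>\<gamma>. norm (z \<gamma>) \<le> M"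
  by (auto simp: linf_sum_def bdd_above_def)

lemma dist_ge:
  assumes "z \<in> linf_sum X" "w \<in> linf_sum X"
  shows "norm (z \<gamma> - w \<gamma>) \<le> linf_dist z w"
proof -
  obtain M1 M2 where M: "\<And>\<gamma>. norm (z \<gamma>) \<le> M1" "\<And>\<gamma>. norm (w \<gamma>) \<le> M2"
    using linf_sum_bound[OF assms(1)] linf_sum_bound[OF assms(2)] by blast
  have "\<And>\<gamma>. norm (z \<gamma> - w \<gamma>) \<le> M1 + M2"
    by (meson M add_mono norm_triangle_ineq4 order_trans)
  then have "bdd_above (range (\<lambda>\<gamma>. norm (z \<gamma> - w \<gamma>)))" by (rule bddI)
  then show ?thesis unfolding linf_dist_def by (rule linf_norm_ge)
qed

lemma dist_le: "(\<And>\<gamma>. norm (z \<gamma> - w \<gamma>) \<le> B) \<Longrightarrow> linf_dist z w \<le> B"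
  unfolding linf_dist_def by (rule linf_norm_le)

lemma sum_near:
  assumes "m \<in> linf_sum X" "\<And>\<gamma>. q \<gamma> \<in> X \<gamma>" "\<And>\<gamma>. norm (q \<gamma> - m \<gamma>) \<le> B"
  shows "q \<in> linf_sum X"
proof -
  obtain M where M: "\<And>\<gamma>. norm (m \<gamma>) \<le> M" using linf_sum_bound[OF assms(1)] by blast
  have "\<And>\<gamma>. norm (q \<gamma>) \<le> M + B"
  proof -
    fix \<gamma>
    have "norm (q \<gamma>) \<le> norm (m \<gamma>) + norm (q \<gamma> - m \<gamma>)" by (metis norm_triangle_sub add.commute)
    then show "norm (q \<gamma>) \<le> M + B" using M[of \<gamma>] assms(3)[of \<gamma>] by linarith
  qed
  then have "bdd_above (range (\<lambda>\<gamma>. norm (q \<gamma>)))" by (rule bddI)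
  then show ?thesis using assms(2) unfolding linf_sum_def by blast
qed

lemma lcomb_app: "lcomb t x y \<gamma> = (1 - t) *\<^sub>R x \<gamma> + t *\<^sub>R y \<gamma>"
  by (simp add: lcomb_def)

lemma lcomb_same: "lcomb t x x = x"
  by (rule ext) (simp add: lcomb_def algebra_simps)

lemma lcomb_0: "lcomb 0 x y = x" and lcomb_1: "lcomb 1 x y = y"
  by (rule ext, simp add: lcomb_def)+

lemma lcomb_lcomb: "lcomb s (lcomb a x y) (lcomb b x y) = lcomb ((1-s)*a + s*b) x y"
  by (rule ext) (simp add: lcomb_def algebra_simps)

lemma lcomb_homot: "lcomb \<tau> (lcomb l x c) (lcomb l y c) = lcomb l (lcomb \<tau> x y) c"
  by (rule ext) (simp add: lcomb_def algebra_simps)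

lemma lcomb_in:
  assumes "\<And>\<gamma>. subspace (X \<gamma>)" "x \<in> linf_sum X" "y \<in> linf_sum X"
  shows "lcomb t x y \<gamma> \<in> X \<gamma>"
  using assms unfolding lcomb_def linf_sum_def
  by (simp add: subspace_add subspace_scale)

lemma affine1d:
  fixes g :: "real \<Rightarrow> 'b::real_vector"
  assumes dpos: "\<delta> > 0"
    and H: "\<And>a b s. 0 \<le> a \<Longrightarrow> a \<le> b \<Longrightarrow> b \<le> 1 \<Longrightarrow> b - a \<le> \<delta> \<Longrightarrow> 0 \<le> s \<Longrightarrow> s \<le> 1 \<Longrightarrow>
            g ((1-s)*a + s*b) = (1-s) *\<^sub>R g a + s *\<^sub>R g b"
    and t: "0 \<le> t" "t \<le> 1"
  shows "g t = (1-t) *\<^sub>R g 0 + t *\<^sub>R g 1"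
proof -
  define d where "d = min \<delta> 1"
  have d: "0 < d" "d \<le> \<delta>" "d \<le> 1" using dpos unfolding d_def by auto
  define B where "B = (1/d) *\<^sub>R (g d - g 0)"
  define h where "h \<tau> = g \<tau> - g 0 - \<tau> *\<^sub>R B" for \<tau>
  have Hh: "h ((1-s)*a + s*b) = (1-s) *\<^sub>R h a + s *\<^sub>R h b"
    if "0 \<le> a" "a \<le> b" "b \<le> 1" "b - a \<le> d" "0 \<le> s" "s \<le> 1" for a b s
  proof -
    have "g ((1-s)*a + s*b) = (1-s) *\<^sub>R g a + s *\<^sub>R g b" using H that d by auto
    then show ?thesis unfolding h_def by (simp add: algebra_simps)
  qed
  have h0: "h 0 = 0" unfolding h_def by simp
  have hd: "h d = 0" unfolding h_def B_def using d by simp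
  have claim: "\<forall>\<tau>. 0 \<le> \<tau> \<longrightarrow> \<tau> \<le> 1 \<longrightarrow> \<tau> \<le> (real n + 1) * d / 2 \<longrightarrow> h \<tau> = 0" for n
  proof (induction n)
    case 0
    show ?case
    proof (intro allI impI)
      fix \<tau> :: real assume a: "0 \<le> \<tau>" "\<tau> \<le> 1" "\<tau> \<le> (real 0 + 1) * d / 2"
      have "h ((1 - \<tau>/d)*0 + (\<tau>/d)*d) = (1 - \<tau>/d) *\<^sub>R h 0 + (\<tau>/d) *\<^sub>R h d"
        using a d by (intro Hh) auto
      then show "h \<tau> = 0" using h0 hd d by simp
    qed
  next
    case (Suc n)
    show ?case
    proof (intro allI impI)
      fix \<tau> :: real assume a: "0 \<le> \<tau>" "\<tau> \<le> 1" "\<tau> \<le> (real (Suc n) + 1) * d / 2"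
      show "h \<tau> = 0"
      proof (cases "\<tau> \<le> (real n + 1) * d / 2")
        case True then show ?thesis using Suc a by blast
      next
        case False
        define a0 where "a0 = real n * d / 2"
        define s where "s = (d/2) / (\<tau> - a0)"
        have a0: "0 \<le> a0" "a0 \<le> \<tau>" "\<tau> - a0 > d/2" using False d unfolding a0_def
          by (auto simp: algebra_simps)
        have s: "0 < s" "s \<le> 1" unfolding s_def using a0 d by (auto simp: divide_le_eq)
        have pt: "(1-s)*a0 + s*\<tau> = (real n + 1) * d / 2"
        proof -
          have "(1-s)*a0 + s*\<tau> = a0 + s * (\<tau> - a0)" by (simp add: algebra_simps)
          also have "\<dots> = a0 + d/2"
          proof -
            have "\<tau> - a0 \<noteq> 0" using a0 d by linarith
            then have "s * (\<tau> - a0) = d/2" unfolding s_def by (simp add: field_simps)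
            then show ?thesis by simp
          qed
          finally show ?thesis unfolding a0_def by (simp add: algebra_simps)
        qed
        have "h ((1-s)*a0 + s*\<tau>) = (1-s) *\<^sub>R h a0 + s *\<^sub>R h \<tau>"
          using a0 a s d by (intro Hh) (auto simp: a0_def algebra_simps)
        moreover have "h ((1-s)*a0 + s*\<tau>) = 0"
          unfolding pt using Suc a False d by (auto intro!: Suc[rule_format])
        moreover have "h a0 = 0" using Suc a0 a d unfolding a0_def
          by (intro Suc[rule_format]) (auto simp: algebra_simps)
        ultimately have "s *\<^sub>R h \<tau> = 0" by simp
        then show "h \<tau> = 0" using s by simp
      qed
    qed
  qed
  obtain n :: nat where n: "2 / d \<le> real n" using real_arch_simple by blast
  have big: "1 \<le> (real n + 1) * d / 2"
  proof -
    have "2 \<le> real n * d" using n d by (simp add: divide_le_eq mult.commute)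
    then show ?thesis using d by (simp add: algebra_simps)
  qed
  have "h 1 = 0" using claim[of n] big by auto
  moreover have "h t = 0" using claim[of n] big t by auto
  ultimately have "g 1 = g 0 + B" "g t = g 0 + t *\<^sub>R B" unfolding h_def by (auto simp: algebra_simps)
  then show ?thesis by (simp add: algebra_simps)
qed


locale mank =
  fixes X :: "'i \<Rightarrow> 'a::real_normed_vector set" and C :: "('i \<Rightarrow> 'a) set"
    and f :: "('i \<Rightarrow> 'a) \<Rightarrow> 'b::real_normed_vector"
  assumes sub: "\<And>\<gamma>. subspace (X \<gamma>)"
    and sc: "\<And>\<gamma>. strictly_convex_space (X \<gamma>)"
    and nz: "\<And>\<gamma>. \<exists>u\<in>X \<gamma>. norm u = 1"
    and CZ: "C \<subseteq> linf_sum X"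
    and Cconv: "linf_convex C"
    and Lconv: "convex (f ` C)"
    and iso: "\<And>x y. x \<in> C \<Longrightarrow> y \<in> C \<Longrightarrow> dist (f x) (f y) = linf_dist x y"
begin

lemma inZ: "x \<in> C \<Longrightarrow> x \<in> linf_sum X" using CZ by blast

lemma inX: "x \<in> C \<Longrightarrow> x \<gamma> \<in> X \<gamma>" using CZ unfolding linf_sum_def by blast

lemma lcombC: "x \<in> C \<Longrightarrow> y \<in> C \<Longrightarrow> 0 \<le> t \<Longrightarrow> t \<le> 1 \<Longrightarrow> lcomb t x y \<in> C"
  using Cconv unfolding linf_convex_def by blast

lemma preimage:
  assumes "x \<in> C" "y \<in> C" "0 \<le> t" "t \<le> 1"
  obtains w where "w \<in> C" "f w = (1-t) *\<^sub>R f x + t *\<^sub>R f y"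
proof -
  have "(1-t) *\<^sub>R f x + t *\<^sub>R f y \<in> f ` C"
    using Lconv assms by (intro convexD) auto
  then obtain w where "w \<in> C" "(1-t) *\<^sub>R f x + t *\<^sub>R f y = f w" by (rule imageE)
  then show ?thesis using that by simp
qed

lemma dist_comb:
  assumes "x \<in> C" "y \<in> C" "z \<in> C" "z' \<in> C" "w \<in> C" "c \<in> C" "0 \<le> t" "t \<le> 1"
    and "f w = (1-t) *\<^sub>R f x + t *\<^sub>R f y" and "f c = (1-t) *\<^sub>R f z + t *\<^sub>R f z'"
  shows "linf_dist w c \<le> (1-t) * linf_dist x z + t * linf_dist y z'"
proof -
  have "linf_dist w c = norm (f w - f c)" using iso[OF assms(5,6)] by (simp add: dist_norm)
  also have "f w - f c = (1-t) *\<^sub>R (f x - f z) + t *\<^sub>R (f y - f z')"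
    unfolding assms(9,10) by (simp add: algebra_simps)
  also have "norm \<dots> \<le> (1-t) * norm (f x - f z) + t * norm (f y - f z')"
    using assms by (metis (no_types, lifting) abs_of_nonneg diff_ge_0_iff_ge norm_scaleR norm_triangle_ineq)
  also have "\<dots> = (1-t) * linf_dist x z + t * linf_dist y z'"
    using iso[OF assms(1,3)] iso[OF assms(2,4)] by (simp add: dist_norm)
  finally show ?thesis .
qed

lemma flat:
  assumes x: "x \<in> C" and y: "y \<in> C" and r: "r > 0" and fl: "\<And>\<gamma>. norm (y \<gamma> - x \<gamma>) = r"
    and t: "0 \<le> t" "t \<le> 1"
  shows "f (lcomb t x y) = (1-t) *\<^sub>R f x + t *\<^sub>R f y"
proof -
  obtain w where w: "w \<in> C" "f w = (1-t) *\<^sub>R f x + t *\<^sub>R f y" using preimage x y t by blast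
  have dyx: "linf_dist y x = r"
  proof (rule antisym)
    show "linf_dist y x \<le> r" using fl by (intro dist_le) simp
    show "r \<le> linf_dist y x" using dist_ge[OF inZ[OF y] inZ[OF x]] fl by metis
  qed
  have "linf_dist w x = norm (f w - f x)" using iso[OF w(1) x] by (simp add: dist_norm)
  also have "f w - f x = t *\<^sub>R (f y - f x)" unfolding w(2) by (simp add: algebra_simps)
  also have "norm \<dots> = t * linf_dist y x" using iso[OF y x] t by (simp add: dist_norm)
  finally have dwx: "linf_dist w x = t * r" using dyx by simp
  have "linf_dist y w = norm (f y - f w)" using iso[OF y w(1)] by (simp add: dist_norm)
  also have "f y - f w = (1-t) *\<^sub>R (f y - f x)" unfolding w(2) by (simp add: algebra_simps)
  also have "norm \<dots> = (1-t) * linf_dist y x" using iso[OF y x] t by (simp add: dist_norm)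
  finally have dyw: "linf_dist y w = (1-t) * r" using dyx by simp
  have "w = lcomb t x y"
  proof (rule ext)
    fix \<gamma>
    have "w \<gamma> - x \<gamma> = t *\<^sub>R (y \<gamma> - x \<gamma>)"
    proof (rule sc_eq[OF sc sub])
      show "y \<gamma> - x \<gamma> \<in> X \<gamma>" using inX[OF x] inX[OF y] sub by (simp add: subspace_diff)
      show "w \<gamma> - x \<gamma> \<in> X \<gamma>" using inX[OF x] inX[OF w(1)] sub by (simp add: subspace_diff)
      show "norm (y \<gamma> - x \<gamma>) = r" by (rule fl)
      show "norm (w \<gamma> - x \<gamma>) \<le> t * r" using dist_ge[OF inZ[OF w(1)] inZ[OF x]] dwx by metis
      have "norm (y \<gamma> - w \<gamma>) \<le> (1-t) * r" using dist_ge[OF inZ[OF y] inZ[OF w(1)]] dyw by metis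
      then show "norm (y \<gamma> - x \<gamma> - (w \<gamma> - x \<gamma>)) \<le> (1 - t) * r" by simp
    qed (use r t in auto)
    then show "w \<gamma> = lcomb t x y \<gamma>" by (simp add: lcomb_def algebra_simps)
  qed
  then show ?thesis using w by simp
qed

end

context mank begin

lemma local_aff:
  assumes x: "x \<in> C" and y: "y \<in> C" and t: "0 \<le> t" "t \<le> 1"
    and ball: "\<And>q. q \<in> linf_sum X \<Longrightarrow> linf_dist q (lcomb t x y) \<le> 3 * linf_dist y x \<Longrightarrow> q \<in> C"
  shows "f (lcomb t x y) = (1-t) *\<^sub>R f x + t *\<^sub>R f y"
proof -
  define m where "m = lcomb t x y"
  define D where "D = linf_dist y x"
  have mC: "m \<in> C" unfolding m_def using lcombC x y t by blast
  obtain w where w: "w \<in> C" "f w = (1-t) *\<^sub>R f x + t *\<^sub>R f y" using preimage x y t by blast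
  define dd where "dd = (\<lambda>\<gamma>. y \<gamma> - x \<gamma>)"
  have ddD: "norm (dd \<gamma>) \<le> D" for \<gamma> unfolding dd_def D_def using dist_ge[OF inZ[OF y] inZ[OF x]] .
  have D0: "0 \<le> D" using ddD[of undefined] norm_ge_zero order_trans by blast
  have mx: "m \<gamma> - x \<gamma> = t *\<^sub>R dd \<gamma>" for \<gamma> unfolding m_def dd_def lcomb_def by (simp add: algebra_simps)
  have ym: "y \<gamma> - m \<gamma> = (1-t) *\<^sub>R dd \<gamma>" for \<gamma> unfolding m_def dd_def lcomb_def by (simp add: algebra_simps)
  have ddX: "dd \<gamma> \<in> X \<gamma>" for \<gamma> unfolding dd_def using inX[OF x] inX[OF y] sub by (simp add: subspace_diff)
  have "w = m"
  proof (rule ccontr)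
    assume "w \<noteq> m"
    then obtain \<gamma>0 where g0: "w \<gamma>0 \<noteq> m \<gamma>0" by auto
    define k where "k = w \<gamma>0 - m \<gamma>0"
    have k0: "norm k > 0" using g0 unfolding k_def by simp
    have kX: "k \<in> X \<gamma>0" unfolding k_def using inX[OF w(1)] inX[OF mC] sub by (simp add: subspace_diff)
    define \<rho> where "\<rho> = norm (dd \<gamma>0)"
    define s where "s = 2 * D"
    have \<rho>D: "\<rho> \<le> D" "0 \<le> \<rho>" unfolding \<rho>_def using ddD by auto
    obtain u where u: "\<And>\<gamma>. u \<gamma> \<in> X \<gamma>" "\<And>\<gamma>. norm (u \<gamma>) = 1" using nz by metis
    define e where "e = (\<lambda>\<gamma>. if \<gamma> = \<gamma>0 then dd \<gamma>0 else \<rho> *\<^sub>R u \<gamma>)"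
    define v where "v = (\<lambda>\<gamma>. if \<gamma> = \<gamma>0 then - (s / norm k) *\<^sub>R k else 0)"
    define z where "z = (\<lambda>\<gamma>. m \<gamma> + v \<gamma> - t *\<^sub>R e \<gamma>)"
    define z' where "z' = (\<lambda>\<gamma>. m \<gamma> + v \<gamma> + (1-t) *\<^sub>R e \<gamma>)"
    have eX: "e \<gamma> \<in> X \<gamma>" for \<gamma> unfolding e_def using ddX u sub by (simp add: subspace_scale)
    have vX: "v \<gamma> \<in> X \<gamma>" for \<gamma> unfolding v_def using kX sub by (simp add: subspace_scale subspace_neg subspace_0)
    have ne: "norm (e \<gamma>) = \<rho>" for \<gamma> unfolding e_def \<rho>_def using u by simp
    have nv: "norm (v \<gamma>) \<le> s" for \<gamma> unfolding v_def s_def using k0 D0 by auto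
    have nv0: "norm (v \<gamma>0) = s" unfolding v_def s_def using k0 D0 by auto
    have zC: "z \<in> C"
    proof (rule ball)
      have nb: "norm (z \<gamma> - m \<gamma>) \<le> 3 * D" for \<gamma>
      proof -
        have "norm (z \<gamma> - m \<gamma>) = norm (v \<gamma> - t *\<^sub>R e \<gamma>)" unfolding z_def by simp
        also have "\<dots> \<le> norm (v \<gamma>) + t * norm (e \<gamma>)" using t by (metis abs_of_nonneg norm_scaleR norm_triangle_ineq4)
        also have "\<dots> \<le> s + 1 * D" using nv[of \<gamma>] ne[of \<gamma>] t \<rho>D by (intro add_mono mult_mono) auto
        finally show ?thesis unfolding s_def by simp
      qed
      have zX: "z \<gamma> \<in> X \<gamma>" for \<gamma> unfolding z_def using inX[OF mC] vX eX sub
        by (simp add: subspace_add subspace_diff subspace_scale)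
      show "z \<in> linf_sum X" by (rule sum_near[OF inZ[OF mC] zX nb])
      show "linf_dist z (lcomb t x y) \<le> 3 * linf_dist y x"
        unfolding m_def[symmetric] D_def[symmetric] by (rule dist_le[OF nb])
    qed
    have z'C: "z' \<in> C"
    proof (rule ball)
      have nb: "norm (z' \<gamma> - m \<gamma>) \<le> 3 * D" for \<gamma>
      proof -
        have "norm (z' \<gamma> - m \<gamma>) = norm (v \<gamma> + (1-t) *\<^sub>R e \<gamma>)" unfolding z'_def by simp
        also have "\<dots> \<le> norm (v \<gamma>) + (1-t) * norm (e \<gamma>)" using t by (metis abs_of_nonneg diff_ge_0_iff_ge norm_scaleR norm_triangle_ineq)
        also have "\<dots> \<le> s + 1 * D" using nv[of \<gamma>] ne[of \<gamma>] t \<rho>D by (intro add_mono mult_mono) auto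
        finally show ?thesis unfolding s_def by simp
      qed
      have zX: "z' \<gamma> \<in> X \<gamma>" for \<gamma> unfolding z'_def using inX[OF mC] vX eX sub
        by (simp add: subspace_add subspace_diff subspace_scale)
      show "z' \<in> linf_sum X" by (rule sum_near[OF inZ[OF mC] zX nb])
      show "linf_dist z' (lcomb t x y) \<le> 3 * linf_dist y x"
        unfolding m_def[symmetric] D_def[symmetric] by (rule dist_le[OF nb])
    qed
    define c where "c = lcomb t z z'"
    have cC: "c \<in> C" unfolding c_def using lcombC zC z'C t by blast
    have c_eq: "c = (\<lambda>\<gamma>. m \<gamma> + v \<gamma>)" unfolding c_def z_def z'_def lcomb_def
      by (rule ext) (simp add: algebra_simps)
    have fc: "f c = (1-t) *\<^sub>R f z + t *\<^sub>R f z'"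
    proof (cases "\<rho> = 0")
      case True
      then have "e = (\<lambda>_. 0)" using ne by (auto simp: fun_eq_iff)
      then have "z' = z" unfolding z_def z'_def by simp
      then show ?thesis unfolding c_def by (simp add: lcomb_same algebra_simps)
    next
      case False
      have "f (lcomb t z z') = (1-t) *\<^sub>R f z + t *\<^sub>R f z'"
      proof (rule flat[OF zC z'C _ _ t])
        show "0 < \<rho>" using False \<rho>D by simp
        show "norm (z' \<gamma> - z \<gamma>) = \<rho>" for \<gamma>
        proof -
          have "z' \<gamma> - z \<gamma> = e \<gamma>" unfolding z_def z'_def by (simp add: algebra_simps)
          then show ?thesis using ne by simp
        qed
      qed
      then show ?thesis unfolding c_def .
    qed
    have bound: "linf_dist w c \<le> (1-t) * linf_dist x z + t * linf_dist y z'"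
      by (rule dist_comb[OF x y zC z'C w(1) cC t w(2) fc])
    have dxz: "linf_dist x z \<le> s"
    proof (rule dist_le)
      fix \<gamma>
      have eq: "x \<gamma> - z \<gamma> = t *\<^sub>R (e \<gamma> - dd \<gamma>) - v \<gamma>"
        using mx[of \<gamma>] unfolding z_def by (simp add: algebra_simps)
      show "norm (x \<gamma> - z \<gamma>) \<le> s"
      proof (cases "\<gamma> = \<gamma>0")
        case True then show ?thesis unfolding eq using nv0 by (simp add: e_def)
      next
        case False
        then have "norm (x \<gamma> - z \<gamma>) = norm (t *\<^sub>R (e \<gamma> - dd \<gamma>))" unfolding eq by (simp add: v_def)
        also have "\<dots> = t * norm (e \<gamma> - dd \<gamma>)" using t by simp
        also have "\<dots> \<le> 1 * (\<rho> + D)" using t ne[of \<gamma>] ddD[of \<gamma>] \<rho>D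
          by (intro mult_mono) (auto intro: order_trans[OF norm_triangle_ineq4])
        also have "\<dots> \<le> s" unfolding s_def using \<rho>D by simp
        finally show ?thesis .
      qed
    qed
    have dyz: "linf_dist y z' \<le> s"
    proof (rule dist_le)
      fix \<gamma>
      have eq: "y \<gamma> - z' \<gamma> = (1-t) *\<^sub>R (dd \<gamma> - e \<gamma>) - v \<gamma>"
        using ym[of \<gamma>] unfolding z'_def by (simp add: algebra_simps)
      show "norm (y \<gamma> - z' \<gamma>) \<le> s"
      proof (cases "\<gamma> = \<gamma>0")
        case True then show ?thesis unfolding eq using nv0 by (simp add: e_def)
      next
        case False
        then have "norm (y \<gamma> - z' \<gamma>) = norm ((1-t) *\<^sub>R (dd \<gamma> - e \<gamma>))" unfolding eq by (simp add: v_def)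
        also have "\<dots> = (1-t) * norm (dd \<gamma> - e \<gamma>)" using t by simp
        also have "\<dots> \<le> 1 * (D + \<rho>)" using t ne[of \<gamma>] ddD[of \<gamma>] \<rho>D
          by (intro mult_mono) (auto intro: order_trans[OF norm_triangle_ineq4])
        also have "\<dots> \<le> s" unfolding s_def using \<rho>D by simp
        finally show ?thesis .
      qed
    qed
    have "linf_dist w c \<le> (1-t) * s + t * s"
      using bound dxz dyz t by (smt (verit) mult_left_mono)
    then have wc: "linf_dist w c \<le> s" by (simp add: algebra_simps)
    have "w \<gamma>0 - c \<gamma>0 = (1 + s / norm k) *\<^sub>R k"
      unfolding c_eq k_def v_def by (simp add: algebra_simps)
    moreover have "norm ((1 + s / norm k) *\<^sub>R k) = norm k + s"
    proof -
      have s0: "0 \<le> s" unfolding s_def using D0 by simp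
      have "norm ((1 + s / norm k) *\<^sub>R k) = (1 + s / norm k) * norm k"
        using s0 k0 by simp
      also have "\<dots> = norm k + s" using k0 by (simp add: field_simps)
      finally show ?thesis .
    qed
    ultimately have "norm (w \<gamma>0 - c \<gamma>0) = norm k + s" by simp
    moreover have "norm (w \<gamma>0 - c \<gamma>0) \<le> linf_dist w c" using dist_ge[OF inZ[OF w(1)] inZ[OF cC]] .
    ultimately show False using wc k0 by simp
  qed
  then show ?thesis using w unfolding m_def by simp
qed

end

context mank begin

lemma seg_aff:
  assumes x: "x \<in> C" and y: "y \<in> C" and \<rho>: "\<rho> > 0"
    and ball: "\<And>\<tau> q. 0 \<le> \<tau> \<Longrightarrow> \<tau> \<le> 1 \<Longrightarrow> q \<in> linf_sum X \<Longrightarrow> linf_dist q (lcomb \<tau> x y) \<le> \<rho> \<Longrightarrow> q \<in> C"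
    and t: "0 \<le> t" "t \<le> 1"
  shows "f (lcomb t x y) = (1-t) *\<^sub>R f x + t *\<^sub>R f y"
proof -
  define D where "D = linf_dist y x"
  define \<delta> where "\<delta> = (if D = 0 then 1 else \<rho> / (3 * D))"
  have dyx: "norm (y \<gamma> - x \<gamma>) \<le> D" for \<gamma> unfolding D_def using dist_ge[OF inZ[OF y] inZ[OF x]] .
  have D0: "0 \<le> D" using dyx[of undefined] norm_ge_zero order_trans by blast
  have \<delta>0: "\<delta> > 0" unfolding \<delta>_def using D0 \<rho> by auto
  define g where "g \<tau> = f (lcomb \<tau> x y)" for \<tau>
  have "g t = (1-t) *\<^sub>R g 0 + t *\<^sub>R g 1"
  proof (rule affine1d[OF \<delta>0 _ t])
    fix a b s :: real
    assume ab: "0 \<le> a" "a \<le> b" "b \<le> 1" "b - a \<le> \<delta>" "0 \<le> s" "s \<le> 1"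
    define x' where "x' = lcomb a x y"
    define y' where "y' = lcomb b x y"
    have x'C: "x' \<in> C" unfolding x'_def using lcombC x y ab by auto
    have y'C: "y' \<in> C" unfolding y'_def using lcombC x y ab by auto
    have "linf_dist y' x' \<le> (b - a) * D"
    proof (rule dist_le)
      fix \<gamma>
      have "y' \<gamma> - x' \<gamma> = (b - a) *\<^sub>R (y \<gamma> - x \<gamma>)" unfolding x'_def y'_def lcomb_def
        by (simp add: algebra_simps)
      then show "norm (y' \<gamma> - x' \<gamma>) \<le> (b - a) * D" using dyx[of \<gamma>] ab by (simp add: mult_left_mono)
    qed
    moreover have "3 * ((b - a) * D) \<le> \<rho>"
    proof (cases "D = 0")
      case True then show ?thesis using \<rho> by simp
    next
      case False
      then have "b - a \<le> \<rho> / (3 * D)" using ab unfolding \<delta>_def by simp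
      then show ?thesis using False D0 by (simp add: le_divide_eq mult.commute mult.left_commute)
    qed
    ultimately have small: "3 * linf_dist y' x' \<le> \<rho>" by linarith
    have "f (lcomb s x' y') = (1-s) *\<^sub>R f x' + s *\<^sub>R f y'"
    proof (rule local_aff[OF x'C y'C ab(5,6)])
      fix q assume q: "q \<in> linf_sum X" "linf_dist q (lcomb s x' y') \<le> 3 * linf_dist y' x'"
      have "lcomb s x' y' = lcomb ((1-s)*a + s*b) x y" unfolding x'_def y'_def by (rule lcomb_lcomb)
      moreover have "0 \<le> (1-s)*a + s*b" "(1-s)*a + s*b \<le> 1" using ab
        by (simp_all add: convex_bound_le)
      ultimately show "q \<in> C" using ball q small by (metis order_trans)
    qed
    then show "g ((1-s)*a + s*b) = (1-s) *\<^sub>R g a + s *\<^sub>R g b"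
      unfolding g_def x'_def y'_def lcomb_lcomb .
  qed
  then show ?thesis unfolding g_def lcomb_0 lcomb_1 .
qed

lemma global_aff:
  assumes x: "x \<in> C" and y: "y \<in> C" and t: "0 \<le> t" "t \<le> 1"
    and c: "c \<in> C" and r: "r > 0" and cball: "{q \<in> linf_sum X. linf_dist q c < r} \<subseteq> C"
  shows "f (lcomb t x y) = (1-t) *\<^sub>R f x + t *\<^sub>R f y"
proof -
  obtain w where w: "w \<in> C" "f w = (1-t) *\<^sub>R f x + t *\<^sub>R f y" using preimage x y t by blast
  define m where "m = lcomb t x y"
  have mC: "m \<in> C" unfolding m_def using lcombC x y t by blast
  define K0 where "K0 = linf_dist x c + linf_dist y c + linf_dist c m"
  have key: "norm (w \<gamma> - m \<gamma>) \<le> l * K0" if l: "0 < l" "l \<le> 1" for l \<gamma>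
  proof -
    define z where "z = lcomb l x c"
    define z' where "z' = lcomb l y c"
    have zC: "z \<in> C" unfolding z_def using lcombC x c l by auto
    have z'C: "z' \<in> C" unfolding z'_def using lcombC y c l by auto
    have fm': "f (lcomb t z z') = (1-t) *\<^sub>R f z + t *\<^sub>R f z'"
    proof (rule seg_aff[OF zC z'C _ _ t])
      show "0 < l * r / 2" using l r by simp
      fix \<tau> q assume a: "0 \<le> \<tau>" "\<tau> \<le> 1" "q \<in> linf_sum X" "linf_dist q (lcomb \<tau> z z') \<le> l * r / 2"
      define P where "P = lcomb \<tau> x y"
      have PC: "P \<in> C" unfolding P_def using lcombC x y a by auto
      have eqP: "lcomb \<tau> z z' = lcomb l P c" unfolding z_def z'_def P_def by (rule lcomb_homot)
      have lPC: "lcomb l P c \<in> C" using lcombC PC c l by auto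
      define q0 where "q0 = (\<lambda>\<gamma>. c \<gamma> + (1/l) *\<^sub>R (q \<gamma> - lcomb l P c \<gamma>))"
      have qX: "q \<gamma> \<in> X \<gamma>" for \<gamma> using a(3) unfolding linf_sum_def by blast
      have q0X: "q0 \<gamma> \<in> X \<gamma>" for \<gamma> unfolding q0_def using inX[OF c] inX[OF lPC] qX sub
        by (simp add: subspace_add subspace_diff subspace_scale)
      have q0n: "norm (q0 \<gamma> - c \<gamma>) \<le> r / 2" for \<gamma>
      proof -
        have "norm (q0 \<gamma> - c \<gamma>) = (1/l) * norm (q \<gamma> - lcomb l P c \<gamma>)" unfolding q0_def using l by simp
        also have "\<dots> \<le> (1/l) * (l * r / 2)"
          using dist_ge[OF a(3) inZ[OF lPC], of \<gamma>] a(4) eqP l by (intro mult_left_mono) auto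
        also have "\<dots> = r / 2" using l by simp
        finally show ?thesis .
      qed
      have q0Z: "q0 \<in> linf_sum X" using sum_near[OF inZ[OF c] q0X q0n] .
      have "linf_dist q0 c \<le> r / 2" using q0n by (rule dist_le)
      then have q0C: "q0 \<in> C" using cball q0Z r by auto
      have "q = lcomb l P q0"
        unfolding q0_def lcomb_def using l by (rule_tac ext) (simp add: algebra_simps)
      then show "q \<in> C" using lcombC PC q0C l by auto
    qed
    define m' where "m' = lcomb t z z'"
    have m'C: "m' \<in> C" unfolding m'_def using lcombC zC z'C t by auto
    have m'eq: "m' = lcomb l m c" unfolding m'_def z_def z'_def m_def by (rule lcomb_homot)
    have b1: "linf_dist w m' \<le> (1-t) * linf_dist x z + t * linf_dist y z'"
      by (rule dist_comb[OF x y zC z'C w(1) m'C t w(2)]) (simp add: m'_def fm')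
    have dxz: "linf_dist x z \<le> l * linf_dist x c"
    proof (rule dist_le)
      fix \<gamma>
      have "x \<gamma> - z \<gamma> = l *\<^sub>R (x \<gamma> - c \<gamma>)" unfolding z_def lcomb_def by (simp add: algebra_simps)
      then show "norm (x \<gamma> - z \<gamma>) \<le> l * linf_dist x c"
        using dist_ge[OF inZ[OF x] inZ[OF c], of \<gamma>] l by (simp add: mult_left_mono)
    qed
    have dyz: "linf_dist y z' \<le> l * linf_dist y c"
    proof (rule dist_le)
      fix \<gamma>
      have "y \<gamma> - z' \<gamma> = l *\<^sub>R (y \<gamma> - c \<gamma>)" unfolding z'_def lcomb_def by (simp add: algebra_simps)
      then show "norm (y \<gamma> - z' \<gamma>) \<le> l * linf_dist y c"
        using dist_ge[OF inZ[OF y] inZ[OF c], of \<gamma>] l by (simp add: mult_left_mono)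
    qed
    have dxc0: "0 \<le> linf_dist x c" "0 \<le> linf_dist y c"
      using dist_ge[OF inZ[OF x] inZ[OF c], of undefined] dist_ge[OF inZ[OF y] inZ[OF c], of undefined]
      by (meson norm_ge_zero order_trans)+
    have "(1-t) * linf_dist x z + t * linf_dist y z' \<le> (1-t) * (l * linf_dist x c) + t * (l * linf_dist y c)"
      using dxz dyz t by (intro add_mono mult_left_mono) auto
    also have "\<dots> \<le> 1 * (l * linf_dist x c) + 1 * (l * linf_dist y c)"
      using t l dxc0 by (intro add_mono mult_right_mono) auto
    finally have wm': "norm (w \<gamma> - m' \<gamma>) \<le> l * linf_dist x c + l * linf_dist y c"
      using b1 dist_ge[OF inZ[OF w(1)] inZ[OF m'C], of \<gamma>] by linarith
    have "m' \<gamma> - m \<gamma> = l *\<^sub>R (c \<gamma> - m \<gamma>)" unfolding m'eq lcomb_def by (simp add: algebra_simps)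
    then have m'm: "norm (m' \<gamma> - m \<gamma>) \<le> l * linf_dist c m"
      using dist_ge[OF inZ[OF c] inZ[OF mC], of \<gamma>] l by (simp add: mult_left_mono)
    have "norm (w \<gamma> - m \<gamma>) \<le> norm (w \<gamma> - m' \<gamma>) + norm (m' \<gamma> - m \<gamma>)"
      by (rule norm_diff_triangle_ineq[of "w \<gamma>" "m' \<gamma>" "m' \<gamma>" "m \<gamma>", simplified])
    then show ?thesis using wm' m'm unfolding K0_def by (simp add: algebra_simps)
  qed
  have "w = m"
  proof (rule ext, rule ccontr)
    fix \<gamma> assume ne: "w \<gamma> \<noteq> m \<gamma>"
    define \<epsilon> where "\<epsilon> = norm (w \<gamma> - m \<gamma>)"
    have e0: "\<epsilon> > 0" using ne unfolding \<epsilon>_def by simp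
    have "norm (w \<gamma> - m \<gamma>) \<le> K0" using key[of 1 \<gamma>] by simp
    then have K00: "0 \<le> K0" using norm_ge_zero order_trans by blast
    define l where "l = min 1 (\<epsilon> / (2 * (K0 + 1)))"
    have l: "0 < l" "l \<le> 1" unfolding l_def using e0 K00 by auto
    have "\<epsilon> \<le> l * K0" using key[OF l] unfolding \<epsilon>_def .
    also have "\<dots> \<le> (\<epsilon> / (2 * (K0 + 1))) * K0" unfolding l_def using K00 by (intro mult_right_mono) auto
    also have "\<dots> < \<epsilon>"
    proof -
      have "K0 < 2 * (K0 + 1)" using K00 by simp
      then have q: "K0 / (2 * (K0 + 1)) < 1" using K00 by simp
      have "(\<epsilon> / (2 * (K0 + 1))) * K0 = \<epsilon> * (K0 / (2 * (K0 + 1)))" by simp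
      also have "\<dots> < \<epsilon> * 1" by (rule mult_strict_left_mono[OF q e0])
      finally show ?thesis by simp
    qed
    finally show False by simp
  qed
  then show ?thesis using w unfolding m_def by simp
qed

end

theorem proposition2p6:
  fixes X :: "'i \<Rightarrow> 'a::banach set"
    and C :: "('i \<Rightarrow> 'a) set"
  assumes "\<And>\<gamma>. subspace (X \<gamma>)"
    and "\<And>\<gamma>. closed (X \<gamma>)"
    and "\<And>\<gamma>. strictly_convex_space (X \<gamma>)"
    and "\<And>\<gamma>. dim_ge_2 (X \<gamma>)"
    and "linf_convex_body X C"
  shows "strong_mankiewicz C TYPE('b::real_normed_vector)"
  unfolding strong_mankiewicz_def
proof (intro allI impI ballI)
  fix f :: "('i \<Rightarrow> 'a) \<Rightarrow> 'b" and L :: "'b set" and x y :: "'i \<Rightarrow> 'a" and t :: real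
  assume H: "convex L \<and> f ` C = L \<and> (\<forall>x\<in>C. \<forall>y\<in>C. dist (f x) (f y) = linf_dist x y)"
    and x: "x \<in> C" and y: "y \<in> C" and t: "0 \<le> t \<and> t \<le> 1"
  have nz: "\<exists>u\<in>X \<gamma>. norm u = 1" for \<gamma>
  proof -
    have "\<not> X \<gamma> \<subseteq> span {0}" using assms(4) unfolding dim_ge_2_def by blast
    then obtain v where v: "v \<in> X \<gamma>" "v \<noteq> 0" by auto
    then have "(1 / norm v) *\<^sub>R v \<in> X \<gamma>" "norm ((1 / norm v) *\<^sub>R v) = 1"
      using assms(1) by (auto simp: subspace_scale)
    then show ?thesis by blast
  qed
  have body: "C \<subseteq> linf_sum X" "linf_convex C" "\<exists>z\<in>C. \<exists>r>0. {w\<in>linf_sum X. linf_dist w z < r} \<subseteq> C"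
    using assms(5) unfolding linf_convex_body_def by auto
  interpret mank X C f
    using assms(1,3) nz body H by unfold_locales auto
  obtain c r where c: "c \<in> C" "r > 0" "{w\<in>linf_sum X. linf_dist w c < r} \<subseteq> C" using body(3) by blast
  show "f (lcomb t x y) = (1 - t) *\<^sub>R f x + t *\<^sub>R f y"
    using global_aff[OF x y _ _ c] t by auto
qed


end
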